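(* For integers $r\ge1$, $n\ge0$, the set \[ S_n=\left\{\mathbf{a}\in\mathbb{Z}^r \;\middle|\; a_1\ge0,\ldots,a_r\ge0,\ \sum_{i=1}^r a_i\le n\right\} \] is integrally-poised for polynomials of degree $n$.
   Context: A numerical (integer-valued) polynomial is a polynomial $f\in\mathbb{Q}[x_1,\ldots,x_r]$ with $f(\mathbf{x})\in\mathbb{Z}$ for all $\mathbf{x}\in\mathbb{Z}^r$. A subset $S\subseteq\mathbb{Z}^r$ is integrally-poised for polynomials of degree $n$ if there exists a family of numerical polynomials $\{c_{\mathbf{a}}\}_{\mathbf{a}\in S}$ such that $f(\mathbf{x})=\sum_{\mathbf{a}\in S}c_{\mathbf{a}}(\mathbf{x})f(\mathbf{a})$ for all polynomials $f$ of degree $n$ and all $\mathbf{x}\in\mathbb{Z}^r$. *)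

theory Defs
  imports Complex_Main
begin

text \<open>Points of Z^r are represented as functions nat => int that vanish outside {0..<r}.\<close>
definition lattice :: "nat \<Rightarrow> (nat \<Rightarrow> int) set" where
  "lattice r = {x. \<forall>i\<ge>r. x i = 0}"

definition exps_upto :: "nat \<Rightarrow> nat \<Rightarrow> (nat \<Rightarrow> nat) set" where
  "exps_upto r n = {e. (\<forall>i\<ge>r. e i = 0) \<and> (\<Sum>i<r. e i) \<le> n}"

definition is_poly :: "nat \<Rightarrow> nat \<Rightarrow> ((nat \<Rightarrow> int) \<Rightarrow> rat) \<Rightarrow> bool" where
  "is_poly r n f \<longleftrightarrow> (\<exists>c :: (nat \<Rightarrow> nat) \<Rightarrow> rat.
      \<forall>x. f x = (\<Sum>e\<in>exps_upto r n. c e * (\<Prod>i<r. of_int (x i) ^ e i)))"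

definition numerical_poly :: "nat \<Rightarrow> ((nat \<Rightarrow> int) \<Rightarrow> rat) \<Rightarrow> bool" where
  "numerical_poly r f \<longleftrightarrow> (\<exists>d. is_poly r d f) \<and> (\<forall>x\<in>lattice r. f x \<in> \<int>)"

definition integrally_poised :: "nat \<Rightarrow> nat \<Rightarrow> (nat \<Rightarrow> int) set \<Rightarrow> bool" where
  "integrally_poised r n S \<longleftrightarrow> S \<subseteq> lattice r \<and>
     (\<exists>c :: (nat \<Rightarrow> int) \<Rightarrow> (nat \<Rightarrow> int) \<Rightarrow> rat.
        (\<forall>a\<in>S. numerical_poly r (c a)) \<and>
        (\<forall>f. is_poly r n f \<longrightarrow> (\<forall>x\<in>lattice r. f x = (\<Sum>a\<in>S. c a x * f a))))"

definition simplex_set :: "nat \<Rightarrow> nat \<Rightarrow> (nat \<Rightarrow> int) set" where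
  "simplex_set r n = {a \<in> lattice r. (\<forall>i<r. a i \<ge> 0) \<and> (\<Sum>i<r. a i) \<le> int n}"

end

theory Submission
  imports Defs
begin

definition spn :: "('j \<Rightarrow> 'a \<Rightarrow> rat) \<Rightarrow> 'j set \<Rightarrow> ('a \<Rightarrow> rat) \<Rightarrow> bool" where
  "spn \<phi> I f \<longleftrightarrow> (\<exists>q. \<forall>x. f x = (\<Sum>j\<in>I. q j * \<phi> j x))"

lemma spn_basis: "finite I \<Longrightarrow> j \<in> I \<Longrightarrow> spn \<phi> I (\<phi> j)"
proof -
  assume a: "finite I" "j \<in> I"
  have "\<phi> j x = (\<Sum>i\<in>I. (if i = j then 1 else 0) * \<phi> i x)" for x
  proof -
    have "(\<Sum>i\<in>I. (if i = j then 1 else 0) * \<phi> i x) = (\<Sum>i\<in>I. (if i = j then \<phi> i x else 0))"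
      by (rule sum.cong) auto
    also have "\<dots> = \<phi> j x" using a by (simp add: sum.delta')
    finally show ?thesis by simp
  qed
  then show ?thesis unfolding spn_def by (intro exI[of _ "\<lambda>i. if i = j then 1 else 0"]) blast
qed

lemma spn_zero: "spn \<phi> I (\<lambda>x. 0)"
  unfolding spn_def by (rule exI[of _ "\<lambda>i. 0"]) simp

lemma spn_add: "spn \<phi> I f \<Longrightarrow> spn \<phi> I g \<Longrightarrow> spn \<phi> I (\<lambda>x. f x + g x)"
  unfolding spn_def
proof (elim exE)
  fix q1 q2 assume 1: "\<forall>x. f x = (\<Sum>j\<in>I. q1 j * \<phi> j x)" and 2: "\<forall>x. g x = (\<Sum>j\<in>I. q2 j * \<phi> j x)"
  show "\<exists>q. \<forall>x. f x + g x = (\<Sum>j\<in>I. q j * \<phi> j x)"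
    by (rule exI[of _ "\<lambda>j. q1 j + q2 j"]) (simp add: 1 2 sum.distrib distrib_right)
qed

lemma spn_scale: "spn \<phi> I f \<Longrightarrow> spn \<phi> I (\<lambda>x. c * f x)"
  unfolding spn_def
proof (elim exE)
  fix q1 assume 1: "\<forall>x. f x = (\<Sum>j\<in>I. q1 j * \<phi> j x)"
  show "\<exists>q. \<forall>x. c * f x = (\<Sum>j\<in>I. q j * \<phi> j x)"
    by (rule exI[of _ "\<lambda>j. c * q1 j"]) (simp add: 1 sum_distrib_left mult.assoc)
qed

lemma spn_sum: "finite A \<Longrightarrow> (\<And>a. a \<in> A \<Longrightarrow> spn \<phi> I (f a)) \<Longrightarrow> spn \<phi> I (\<lambda>x. \<Sum>a\<in>A. f a x)"
proof (induction A rule: finite_induct)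
  case empty then show ?case by (simp add: spn_zero)
next
  case (insert a A)
  then show ?case using spn_add[of \<phi> I "f a" "\<lambda>x. \<Sum>a\<in>A. f a x"] by simp
qed

lemma spn_cong: "spn \<phi> I f \<Longrightarrow> (\<And>x. f x = g x) \<Longrightarrow> spn \<phi> I g"
proof -
  assume a: "spn \<phi> I f" and b: "\<And>x. f x = g x"
  have "f = g" using b by (rule ext)
  then show ?thesis using a by simp
qed

lemma spn_trans:
  assumes "finite I" "\<And>j. j \<in> I \<Longrightarrow> spn \<psi> J (\<phi> j)" "spn \<phi> I f"
  shows "spn \<psi> J f"
proof -
  from assms(3) obtain q where q: "\<And>x. f x = (\<Sum>j\<in>I. q j * \<phi> j x)" unfolding spn_def by blast
  have "spn \<psi> J (\<lambda>x. \<Sum>j\<in>I. q j * \<phi> j x)"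
    by (rule spn_sum[OF assms(1)]) (rule spn_scale, rule assms(2))
  then show ?thesis by (rule spn_cong) (simp add: q)
qed

lemma spn_mono: "finite J \<Longrightarrow> I \<subseteq> J \<Longrightarrow> spn \<phi> I f \<Longrightarrow> spn \<phi> J f"
proof -
  assume a: "finite J" "I \<subseteq> J" "spn \<phi> I f"
  have "finite I" using a(1,2) by (rule finite_subset[rotated])
  have "spn \<phi> J (\<phi> j)" if "j \<in> I" for j
    using spn_basis[of J j \<phi>] a(1,2) that by blast
  then show ?thesis using spn_trans[OF \<open>finite I\<close> _ a(3)] by blast
qed

lemma spn_comp: "spn \<phi> I f \<Longrightarrow> spn (\<lambda>j x. \<phi> j (h x)) I (\<lambda>x. f (h x))"
proof -
  assume "spn \<phi> I f"
  then obtain q where q: "\<And>x. f x = (\<Sum>j\<in>I. q j * \<phi> j x)" unfolding spn_def by blast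
  show ?thesis unfolding spn_def by (intro exI[of _ q] allI) (rule q)
qed

lemma U1: "spn (\<lambda>m (x::rat). x ^ m) {..k} (\<lambda>x. x gchoose k)"
proof (induction k)
  case 0
  show ?case by (rule spn_cong[OF spn_basis[of "{..0}" 0]]) auto
next
  case (Suc k)
  have xm: "spn (\<lambda>m (x::rat). x ^ m) {..Suc k} (\<lambda>x. x * x ^ m)" if "m \<le> k" for m
    using spn_basis[of "{..Suc k}" "Suc m" "\<lambda>m (x::rat). x ^ m"] that by simp
  from Suc obtain p where p: "\<And>x::rat. x gchoose k = (\<Sum>m\<le>k. p m * x ^ m)" unfolding spn_def by blast
  have eq: "x gchoose (Suc k) = (\<Sum>m\<le>k. (p m / of_nat (Suc k)) * (x * x ^ m) + (- p m * of_nat k / of_nat (Suc k)) * x ^ m)" for x :: rat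
  proof -
    have "of_nat (Suc k) * (x gchoose (Suc k)) = (x - of_nat k) * (x gchoose k)"
      using gbinomial_mult_1[of x k] by (simp add: algebra_simps)
    then have "x gchoose (Suc k) = (x - of_nat k) * (x gchoose k) / of_nat (Suc k)"
      by (simp add: field_simps del: of_nat_Suc)
    also have "\<dots> = (\<Sum>m\<le>k. (x - of_nat k) * (p m * x ^ m) / of_nat (Suc k))"
      by (simp add: p sum_distrib_left sum_divide_distrib)
    also have "\<dots> = (\<Sum>m\<le>k. (p m / of_nat (Suc k)) * (x * x ^ m) + (- p m * of_nat k / of_nat (Suc k)) * x ^ m)"
      by (rule sum.cong) (simp_all add: field_simps del: of_nat_Suc)
    finally show ?thesis .
  qed
  have "spn (\<lambda>m (x::rat). x ^ m) {..Suc k} (\<lambda>x. \<Sum>m\<le>k. (p m / of_nat (Suc k)) * (x * x ^ m) + (- p m * of_nat k / of_nat (Suc k)) * x ^ m)"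
    apply (rule spn_sum, simp)
    apply (rule spn_add)
     apply (rule spn_scale, rule xm, simp)
    apply (rule spn_scale, rule spn_basis, auto)
    done
  then show ?case by (rule spn_cong) (rule eq[symmetric])
qed

lemma U2: "spn (\<lambda>j (x::rat). x gchoose j) {..m} (\<lambda>x. x ^ m)"
proof (induction m)
  case 0
  show ?case by (rule spn_cong[OF spn_basis[of "{..0}" 0]]) auto
next
  case (Suc m)
  from Suc obtain q where q: "\<And>x::rat. x ^ m = (\<Sum>j\<le>m. q j * (x gchoose j))" unfolding spn_def by blast
  have eq: "x ^ Suc m = (\<Sum>j\<le>m. q j * (of_nat j * (x gchoose j)) + q j * of_nat (Suc j) * (x gchoose Suc j))" for x :: rat
  proof -
    have "x ^ Suc m = (\<Sum>j\<le>m. q j * (x * (x gchoose j)))"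
      by (simp add: q sum_distrib_left algebra_simps)
    also have "\<dots> = (\<Sum>j\<le>m. q j * (of_nat j * (x gchoose j)) + q j * of_nat (Suc j) * (x gchoose Suc j))"
      by (rule sum.cong) (simp_all only: gbinomial_mult_1 algebra_simps)
    finally show ?thesis .
  qed
  have "spn (\<lambda>j (x::rat). x gchoose j) {..Suc m} (\<lambda>x. \<Sum>j\<le>m. q j * (of_nat j * (x gchoose j)) + q j * of_nat (Suc j) * (x gchoose Suc j))"
    apply (rule spn_sum, simp)
    apply (rule spn_add)
     apply (rule spn_scale, rule spn_scale, rule spn_basis, simp, simp)
    apply (subst mult.assoc, rule spn_scale, rule spn_scale, rule spn_basis, auto)
    done
  then show ?case by (rule spn_cong) (rule eq[symmetric])
qed

lemma U3: "(of_int z gchoose j :: rat) \<in> \<int>"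
proof (cases "z \<ge> 0")
  case True
  then have "(of_int z :: rat) = of_nat (nat z)" by simp
  then have "(of_int z gchoose j :: rat) = of_nat (nat z choose j)"
    by (simp only: binomial_gbinomial)
  then show ?thesis by (simp only: Ints_of_nat)
next
  case False
  define w where "w = nat (int j - z - 1)"
  have w: "int j - z - 1 = int w" using False unfolding w_def by simp
  have "(of_nat j - of_int z - 1 :: rat) = of_int (int j - z - 1)" by simp
  also have "\<dots> = of_nat w" by (simp only: w of_int_of_nat_eq)
  finally have e: "(of_nat j - of_int z - 1 :: rat) = of_nat w" .
  have "(of_int z gchoose j :: rat) = (-1)^j * ((of_nat j - of_int z - 1) gchoose j)"
    by (rule gbinomial_negated_upper)
  also have "\<dots> = (-1)^j * of_nat (w choose j)"
    by (simp only: e binomial_gbinomial)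
  finally show ?thesis by (simp only: Ints_mult Ints_power Ints_minus Ints_1 Ints_of_nat)
qed

lemma U4: "(\<Sum>t\<le>m. (-1)^(m-t) * of_nat (m choose t) * of_nat (t choose j) :: rat) = (if j = m then 1 else 0)"
proof (cases "j \<le> m")
  case False
  then show ?thesis by (auto intro!: sum.neutral simp: binomial_eq_0)
next
  case True
  have "(\<Sum>t\<le>m. (-1)^(m-t) * of_nat (m choose t) * of_nat (t choose j) :: rat)
      = (\<Sum>t\<in>{j..m}. (-1)^(m-t) * of_nat (m choose t) * of_nat (t choose j))"
    by (rule sum.mono_neutral_right) (auto simp: binomial_eq_0)
  also have "\<dots> = (\<Sum>t\<in>{j..m}. of_nat (m choose j) * ((-1)^(m-t) * of_nat ((m - j) choose (t - j))))"
  proof (rule sum.cong)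
    fix t assume "t \<in> {j..m}"
    then have "(m choose t) * (t choose j) = (m choose j) * ((m - j) choose (t - j))"
      by (intro choose_mult) auto
    then have "of_nat (m choose t) * of_nat (t choose j) = (of_nat (m choose j) * of_nat ((m - j) choose (t - j)) :: rat)"
      by (metis of_nat_mult)
    then show "(-1)^(m-t) * of_nat (m choose t) * of_nat (t choose j) = of_nat (m choose j) * ((-1)^(m-t) * of_nat ((m - j) choose (t - j)) :: rat)"
      by (simp add: algebra_simps)
  qed simp
  also have "\<dots> = of_nat (m choose j) * (\<Sum>t\<in>{j..m}. (-1)^(m-t) * of_nat ((m - j) choose (t - j)))"
    by (simp add: sum_distrib_left)
  also have "(\<Sum>t\<in>{j..m}. (-1)^(m-t) * of_nat ((m - j) choose (t - j)) :: rat) = (\<Sum>s\<in>{0..m-j}. (-1)^(m-j-s) * of_nat ((m - j) choose s))"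
  proof -
    have "{j..m} = {0+j..(m-j)+j}" using True by simp
    then have "(\<Sum>t\<in>{j..m}. (-1)^(m-t) * of_nat ((m - j) choose (t - j)) :: rat) = (\<Sum>s\<in>{0..m-j}. (-1)^(m-(s+j)) * of_nat ((m - j) choose (s+j - j)))"
      by (simp only: sum.shift_bounds_cl_nat_ivl)
    also have "\<dots> = (\<Sum>s\<in>{0..m-j}. (-1)^(m-j-s) * of_nat ((m - j) choose s))"
      by (rule sum.cong) (auto simp: add.commute)
    finally show ?thesis .
  qed
  also have "\<dots> = (1 + (-1::rat))^(m-j)"
    by (subst binomial_ring) (simp add: atLeast0AtMost mult.commute)
  finally show ?thesis using True by auto
qed


definition Box :: "nat \<Rightarrow> (nat \<Rightarrow> nat) \<Rightarrow> (nat \<Rightarrow> nat) set" where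
  "Box r K = {a. (\<forall>i<r. a i \<le> K i) \<and> (\<forall>i\<ge>r. a i = 0)}"

lemma Box_0: "Box 0 K = {\<lambda>_. 0}"
  unfolding Box_def by auto

lemma Box_Suc: "Box (Suc r) K = (\<lambda>(a,j). a(r:=j)) ` (Box r K \<times> {..K r})"
proof (intro equalityI subsetI)
  fix b assume b: "b \<in> Box (Suc r) K"
  then have "b = (\<lambda>(a,j). a(r:=j)) (b(r:=0), b r)" "(b(r:=0), b r) \<in> Box r K \<times> {..K r}"
    unfolding Box_def by auto
  then show "b \<in> (\<lambda>(a,j). a(r:=j)) ` (Box r K \<times> {..K r})" by blast
next
  fix b assume "b \<in> (\<lambda>(a,j). a(r:=j)) ` (Box r K \<times> {..K r})"
  then show "b \<in> Box (Suc r) K" unfolding Box_def by (auto simp: less_Suc_eq)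
qed

lemma Box_inj: "inj_on (\<lambda>(a,j). a(r:=j)) (Box r K \<times> {..K r})"
proof (rule inj_onI)
  fix p p' assume p: "p \<in> Box r K \<times> {..K r}" and p': "p' \<in> Box r K \<times> {..K r}"
    and e: "(\<lambda>(a,j). a(r:=j)) p = (\<lambda>(a,j). a(r:=j)) p'"
  obtain a j where pa: "p = (a, j)" by (cases p)
  obtain a' j' where pa': "p' = (a', j')" by (cases p')
  have e2: "a(r:=j) = a'(r:=j')" using e pa pa' by simp
  have ar: "a r = 0" "a' r = 0" using p p' pa pa' unfolding Box_def by auto
  have "j = j'" using fun_cong[OF e2, of r] by simp
  moreover have "a x = a' x" for x
  proof (cases "x = r")
    case True then show ?thesis using ar by simp
  next
    case False then show ?thesis using fun_cong[OF e2, of x] by simp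
  qed
  ultimately show "p = p'" using pa pa' by auto
qed

lemma finite_Box: "finite (Box r K)"
  by (induction r) (auto simp: Box_0 Box_Suc)

lemma prod_sum_Box:
  fixes g :: "nat \<Rightarrow> nat \<Rightarrow> 'c::comm_semiring_1"
  shows "(\<Prod>i<r. \<Sum>j\<le>K i. g i j) = (\<Sum>a\<in>Box r K. \<Prod>i<r. g i (a i))"
proof (induction r)
  case 0
  then show ?case by (simp add: Box_0)
next
  case (Suc r)
  have "(\<Sum>a\<in>Box (Suc r) K. \<Prod>i<Suc r. g i (a i))
      = (\<Sum>p\<in>Box r K \<times> {..K r}. \<Prod>i<Suc r. g i (((\<lambda>(a,j). a(r:=j)) p) i))"
    unfolding Box_Suc by (subst sum.reindex[OF Box_inj]) (simp add: comp_def)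
  also have "\<dots> = (\<Sum>p\<in>Box r K \<times> {..K r}. (\<Prod>i<r. g i (fst p i)) * g r (snd p))"
  proof (rule sum.cong[OF refl])
    fix p :: "(nat \<Rightarrow> nat) \<times> nat"
    obtain a j where pa: "p = (a, j)" by (cases p)
    have "(\<Prod>i<r. g i ((a(r:=j)) i)) = (\<Prod>i<r. g i (a i))" by (rule prod.cong) auto
    then show "(\<Prod>i<Suc r. g i (((\<lambda>(a,j). a(r:=j)) p) i)) = (\<Prod>i<r. g i (fst p i)) * g r (snd p)"
      by (simp add: pa)
  qed
  also have "\<dots> = (\<Sum>a\<in>Box r K. \<Sum>j\<le>K r. (\<Prod>i<r. g i (a i)) * g r j)"
    by (subst sum.cartesian_product) (simp add: case_prod_beta)
  also have "\<dots> = (\<Sum>a\<in>Box r K. \<Prod>i<r. g i (a i)) * (\<Sum>j\<le>K r. g r j)"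
    by (simp add: sum_product)
  finally show ?case using Suc by simp
qed

lemma spn_prod:
  assumes "\<And>i. i < r \<Longrightarrow> spn \<phi> {..K i} (g i)"
  shows "spn (\<lambda>e x. \<Prod>i<r. \<phi> (e i) (x i)) (Box r K) (\<lambda>x. \<Prod>i<r. g i (x i))"
proof -
  have "\<forall>i\<in>{..<r}. \<exists>q. \<forall>x. g i x = (\<Sum>j\<le>K i. q j * \<phi> j x)"
    using assms unfolding spn_def by blast
  from bchoice[OF this] obtain Q where Q0: "\<forall>i\<in>{..<r}. \<forall>x. g i x = (\<Sum>j\<le>K i. Q i j * \<phi> j x)"
    by blast
  have Q: "\<And>i x. i < r \<Longrightarrow> g i x = (\<Sum>j\<le>K i. Q i j * \<phi> j x)" using Q0 by blast
  have "(\<Prod>i<r. g i (x i)) = (\<Sum>a\<in>Box r K. (\<Prod>i<r. Q i (a i)) * (\<Prod>i<r. \<phi> (a i) (x i)))" for x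
  proof -
    have "(\<Prod>i<r. g i (x i)) = (\<Prod>i<r. \<Sum>j\<le>K i. Q i j * \<phi> j (x i))"
      by (rule prod.cong) (auto simp: Q)
    also have "\<dots> = (\<Sum>a\<in>Box r K. \<Prod>i<r. Q i (a i) * \<phi> (a i) (x i))"
      by (rule prod_sum_Box)
    also have "\<dots> = (\<Sum>a\<in>Box r K. (\<Prod>i<r. Q i (a i)) * (\<Prod>i<r. \<phi> (a i) (x i)))"
      by (simp add: prod.distrib)
    finally show ?thesis .
  qed
  then show ?thesis unfolding spn_def by (intro exI[of _ "\<lambda>a. \<Prod>i<r. Q i (a i)"] allI) simp
qed


definition Bf :: "nat \<Rightarrow> (nat \<Rightarrow> nat) \<Rightarrow> (nat \<Rightarrow> int) \<Rightarrow> rat" where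
  "Bf r k x = (\<Prod>i<r. (of_int (x i) :: rat) gchoose k i)"
definition Mon :: "nat \<Rightarrow> (nat \<Rightarrow> nat) \<Rightarrow> (nat \<Rightarrow> int) \<Rightarrow> rat" where
  "Mon r e x = (\<Prod>i<r. (of_int (x i) :: rat) ^ e i)"
definition Dc :: "nat \<Rightarrow> (nat \<Rightarrow> nat) \<Rightarrow> (nat \<Rightarrow> nat) \<Rightarrow> rat" where
  "Dc r k a = (\<Prod>i<r. (-1)^(k i - a i) * of_nat (k i choose a i))"
definition Cf :: "nat \<Rightarrow> nat \<Rightarrow> (nat \<Rightarrow> nat) \<Rightarrow> (nat \<Rightarrow> int) \<Rightarrow> rat" where
  "Cf r n a x = (\<Sum>k\<in>exps_upto r n. Dc r k a * Bf r k x)"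

lemma exps_sub_Box: "exps_upto r n \<subseteq> Box r (\<lambda>_. n)"
  unfolding exps_upto_def Box_def
proof clarify
  fix e i assume "\<forall>i\<ge>r. e i = 0" "(\<Sum>i<r. e i) \<le> n" "i < r"
  then show "e i \<le> n" using member_le_sum[of i "{..<r}" e] by auto
qed

lemma finite_exps: "finite (exps_upto r n)"
  using finite_subset[OF exps_sub_Box finite_Box] .

lemma Box_sub: "e \<in> exps_upto r n \<Longrightarrow> Box r e \<subseteq> exps_upto r n"
  unfolding exps_upto_def Box_def
proof clarify
  fix a assume "\<forall>i\<ge>r. e i = 0" "(\<Sum>i<r. e i) \<le> n" "\<forall>i<r. a i \<le> e i" "\<forall>i\<ge>r. a i = 0"
  then show "(\<Sum>i<r. a i) \<le> n" using sum_mono[of "{..<r}" a e] by auto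
qed

lemma M1: assumes "e \<in> exps_upto r n" shows "spn (Bf r) (exps_upto r n) (Mon r e)"
proof -
  have "spn (\<lambda>k x. \<Prod>i<r. (\<lambda>j z. (of_int z :: rat) gchoose j) (k i) (x i)) (Box r e)
          (\<lambda>x. \<Prod>i<r. (\<lambda>z. (of_int z :: rat) ^ e i) (x i))"
    by (rule spn_prod) (rule spn_comp[OF U2])
  then have "spn (Bf r) (Box r e) (Mon r e)"
    unfolding Bf_def Mon_def by (simp add: fun_eq_iff)
  then show ?thesis using spn_mono[OF finite_exps Box_sub[OF assms]] by blast
qed

lemma M2: assumes "k \<in> exps_upto r n" shows "spn (Mon r) (exps_upto r n) (Bf r k)"
proof -
  have "spn (\<lambda>e x. \<Prod>i<r. (\<lambda>j z. (of_int z :: rat) ^ j) (e i) (x i)) (Box r k)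
          (\<lambda>x. \<Prod>i<r. (\<lambda>z. (of_int z :: rat) gchoose k i) (x i))"
    by (rule spn_prod) (rule spn_comp[OF U1])
  then have "spn (Mon r) (Box r k) (Bf r k)"
    unfolding Bf_def Mon_def by (simp add: fun_eq_iff)
  then show ?thesis using spn_mono[OF finite_exps Box_sub[OF assms]] by blast
qed

lemma is_poly_spn: "is_poly r n f \<longleftrightarrow> spn (Mon r) (exps_upto r n) f"
  unfolding is_poly_def spn_def Mon_def by simp

lemma Bf_nat: "Bf r k (\<lambda>i. int (a i)) = (\<Prod>i<r. of_nat (a i choose k i))"
  unfolding Bf_def by (simp add: binomial_gbinomial)

lemma supp_eq: "k \<in> exps_upto r n \<Longrightarrow> k0 \<in> exps_upto r n \<Longrightarrow> (k = k0) = (\<forall>i<r. k0 i = k i)"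
proof -
  assume k: "k \<in> exps_upto r n" and k0: "k0 \<in> exps_upto r n"
  have "k = k0" if h: "\<forall>i<r. k0 i = k i"
  proof
    fix i show "k i = k0 i"
    proof (cases "i < r")
      case True then show ?thesis using h by simp
    next
      case False then show ?thesis using k k0 unfolding exps_upto_def by simp
    qed
  qed
  then show ?thesis by auto
qed

lemma I_lemma:
  assumes k: "k \<in> exps_upto r n" and k0: "k0 \<in> exps_upto r n"
  shows "(\<Sum>a\<in>exps_upto r n. Dc r k a * Bf r k0 (\<lambda>i. int (a i))) = (if k = k0 then 1 else 0)"
proof -
  have "(\<Sum>a\<in>exps_upto r n. Dc r k a * Bf r k0 (\<lambda>i. int (a i))) = (\<Sum>a\<in>Box r k. Dc r k a * Bf r k0 (\<lambda>i. int (a i)))"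
  proof (rule sum.mono_neutral_right[OF finite_exps Box_sub[OF k]], clarify)
    fix a assume a: "a \<in> exps_upto r n" "a \<notin> Box r k"
    then obtain i where "i < r" "a i > k i" unfolding Box_def exps_upto_def by (auto simp: not_le)
    then have "Dc r k a = 0" unfolding Dc_def by (intro prod_zero) (auto simp: binomial_eq_0)
    then show "Dc r k a * Bf r k0 (\<lambda>i. int (a i)) = 0" by simp
  qed
  also have "\<dots> = (\<Sum>a\<in>Box r k. \<Prod>i<r. (-1)^(k i - a i) * of_nat (k i choose a i) * of_nat (a i choose k0 i))"
    unfolding Dc_def Bf_nat by (simp add: prod.distrib)
  also have "\<dots> = (\<Prod>i<r. \<Sum>t\<le>k i. (-1)^(k i - t) * of_nat (k i choose t) * of_nat (t choose k0 i))"
    by (rule prod_sum_Box[symmetric])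
  also have "\<dots> = (\<Prod>i<r. (if k0 i = k i then 1 else 0))"
    by (simp add: U4)
  also have "\<dots> = (if k = k0 then 1 else 0)"
    using supp_eq[OF k k0] by (auto simp: prod_zero_iff)
  finally show ?thesis .
qed

lemma K_lemma:
  assumes k0: "k0 \<in> exps_upto r n"
  shows "(\<Sum>a\<in>exps_upto r n. Cf r n a x * Bf r k0 (\<lambda>i. int (a i))) = Bf r k0 x"
proof -
  have "(\<Sum>a\<in>exps_upto r n. Cf r n a x * Bf r k0 (\<lambda>i. int (a i)))
      = (\<Sum>a\<in>exps_upto r n. \<Sum>k\<in>exps_upto r n. Bf r k x * (Dc r k a * Bf r k0 (\<lambda>i. int (a i))))"
    unfolding Cf_def sum_distrib_right by (simp add: algebra_simps)
  also have "\<dots> = (\<Sum>k\<in>exps_upto r n. Bf r k x * (\<Sum>a\<in>exps_upto r n. Dc r k a * Bf r k0 (\<lambda>i. int (a i))))"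
    by (subst sum.swap) (simp add: sum_distrib_left)
  also have "\<dots> = (\<Sum>k\<in>exps_upto r n. if k = k0 then Bf r k x else 0)"
    by (rule sum.cong) (auto simp: I_lemma k0)
  also have "\<dots> = Bf r k0 x" using k0 finite_exps by (simp add: sum.delta')
  finally show ?thesis .
qed

lemma repro:
  assumes "spn (Bf r) (exps_upto r n) f"
  shows "(\<Sum>a\<in>exps_upto r n. Cf r n a x * f (\<lambda>i. int (a i))) = f x"
proof -
  obtain q where q: "\<And>y. f y = (\<Sum>k\<in>exps_upto r n. q k * Bf r k y)" using assms unfolding spn_def by blast
  have "(\<Sum>a\<in>exps_upto r n. Cf r n a x * f (\<lambda>i. int (a i)))
     = (\<Sum>a\<in>exps_upto r n. \<Sum>k\<in>exps_upto r n. q k * (Cf r n a x * Bf r k (\<lambda>i. int (a i))))"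
    unfolding q sum_distrib_left by (simp add: algebra_simps)
  also have "\<dots> = (\<Sum>k\<in>exps_upto r n. q k * (\<Sum>a\<in>exps_upto r n. Cf r n a x * Bf r k (\<lambda>i. int (a i))))"
    by (subst sum.swap) (simp add: sum_distrib_left)
  also have "\<dots> = f x"
    unfolding q by (rule sum.cong) (auto simp: K_lemma)
  finally show ?thesis .
qed

lemma Cf_int: "Cf r n a x \<in> \<int>"
proof -
  have m1: "(-1::rat) \<in> \<int>" by (rule Ints_minus[OF Ints_1])
  have "Dc r k a \<in> \<int>" for k
    unfolding Dc_def by (rule Ints_prod, rule Ints_mult, rule Ints_power[OF m1], rule Ints_of_nat)
  moreover have "Bf r k x \<in> \<int>" for k
    unfolding Bf_def by (rule Ints_prod, rule U3)
  ultimately show ?thesis unfolding Cf_def by (intro Ints_sum Ints_mult)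
qed

lemma Cf_poly: "is_poly r n (Cf r n a)"
proof -
  have s1: "spn (Bf r) (exps_upto r n) (Cf r n a)"
    unfolding Cf_def by (intro spn_sum finite_exps spn_scale spn_basis)
  have h: "\<And>k. k \<in> exps_upto r n \<Longrightarrow> spn (Mon r) (exps_upto r n) (Bf r k)" by (rule M2)
  show ?thesis unfolding is_poly_spn by (rule spn_trans[OF finite_exps h s1])
qed

lemma simplex_eq: "simplex_set r n = (\<lambda>a i. int (a i)) ` exps_upto r n"
proof (intro equalityI subsetI)
  fix b assume b: "b \<in> simplex_set r n"
  let ?a = "\<lambda>i. nat (b i)"
  have b0i: "b i \<ge> 0" for i
    by (cases "i < r") (use b in \<open>auto simp: simplex_set_def lattice_def\<close>)
  have b0: "\<forall>i. b i \<ge> 0" using b0i by blast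
  then have "b = (\<lambda>i. int (?a i))" by auto
  moreover have "?a \<in> exps_upto r n"
  proof -
    have "int (\<Sum>i<r. ?a i) = (\<Sum>i<r. b i)" using b0 by simp
    also have "\<dots> \<le> int n" using b unfolding simplex_set_def by auto
    finally have "(\<Sum>i<r. ?a i) \<le> n" by (simp only: of_nat_le_iff)
    moreover have "\<forall>i\<ge>r. ?a i = 0" using b unfolding simplex_set_def lattice_def by auto
    ultimately show ?thesis unfolding exps_upto_def by blast
  qed
  ultimately show "b \<in> (\<lambda>a i. int (a i)) ` exps_upto r n" by (rule image_eqI)
next
  fix b assume "b \<in> (\<lambda>a i. int (a i)) ` exps_upto r n"
  then obtain a where a: "a \<in> exps_upto r n" "b = (\<lambda>i. int (a i))" by blast
  have "(\<Sum>i<r. b i) = int (\<Sum>i<r. a i)" using a by simp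
  also have "\<dots> \<le> int n"
  proof -
    have "(\<Sum>i<r. a i) \<le> n" using a(1) unfolding exps_upto_def by blast
    then show ?thesis by (simp only: of_nat_le_iff)
  qed
  finally have s: "(\<Sum>i<r. b i) \<le> int n" .
  then show "b \<in> simplex_set r n" using a unfolding simplex_set_def lattice_def exps_upto_def by auto
qed

theorem proposition3p3:
  fixes r n :: nat
  assumes "r \<ge> 1"
  shows "integrally_poised r n (simplex_set r n)"
  unfolding integrally_poised_def
proof (intro conjI exI[of _ "\<lambda>b. Cf r n (\<lambda>i. nat (b i))"] ballI allI impI)
  show "simplex_set r n \<subseteq> lattice r" unfolding simplex_set_def by auto
next
  fix b assume "b \<in> simplex_set r n"
  show "numerical_poly r (Cf r n (\<lambda>i. nat (b i)))"
    unfolding numerical_poly_def using Cf_poly Cf_int by blast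
next
  fix f x assume f: "is_poly r n f" and x: "x \<in> lattice r"
  have inj: "inj_on (\<lambda>a i. int (a i)) (exps_upto r n)"
    by (rule inj_onI) (auto simp: fun_eq_iff)
  have h: "\<And>e. e \<in> exps_upto r n \<Longrightarrow> spn (Bf r) (exps_upto r n) (Mon r e)" by (rule M1)
  have sp: "spn (Bf r) (exps_upto r n) f"
  proof -
    have "spn (Mon r) (exps_upto r n) f" using f unfolding is_poly_spn .
    then show ?thesis using spn_trans[where \<phi>="Mon r" and I="exps_upto r n" and \<psi>="Bf r" and J="exps_upto r n"] finite_exps h by blast
  qed
  have "(\<Sum>b\<in>simplex_set r n. Cf r n (\<lambda>i. nat (b i)) x * f b)
      = (\<Sum>a\<in>exps_upto r n. Cf r n a x * f (\<lambda>i. int (a i)))"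
    unfolding simplex_eq by (subst sum.reindex[OF inj]) (simp add: comp_def)
  also have "\<dots> = f x" by (rule repro[OF sp])
  finally show "f x = (\<Sum>b\<in>simplex_set r n. Cf r n (\<lambda>i. nat (b i)) x * f b)" by simp
qed

end
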